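(* Let $a<b$ and let $X$ be a random variable taking values in $[a,b]$, with probability density function $f:[a,b]\rightarrow[0,1]$ and cumulative distribution function $F(x)=\Pr(X\le x)=\int_a^x f(t)\,dt$. Assume that $F$ is absolutely continuous with $F'=f\in L^2[a,b]$, and let $\sigma(f)=\|f\|_2^2-\frac{1}{b-a}$. Then for all $x\in[a,\frac{a+b}{2}]$, \[ \left|\frac{1}{2}[F(x)+F(a+b-x)]-\frac{b-E(X)}{b-a}\right|\leq (b-a)^{-1/2} \left[\frac{(b-a)^2}{48}+\left(x-\frac{3a+b}{4}\right)^2\right]^{1/2}\sqrt{\sigma(f)}, \] where $E(X)$ is the expectation of $X$.
   Context: $\|g\|_2=\left(\int_a^b g(t)^2\,dt\right)^{1/2}$. *)

theory Defs
  imports "HOL-Probability.Probability"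
begin

definition sigma_f :: "real \<Rightarrow> real \<Rightarrow> (real \<Rightarrow> real) \<Rightarrow> real" where
  "sigma_f a b f = integral {a..b} (\<lambda>t. (f t)\<^sup>2) - 1 / (b - a)"

end

theory Submission
  imports Defs
begin
lemma int_bdd:
  fixes h :: "real \<Rightarrow> real" and a b C :: real
  assumes "h \<in> borel_measurable lborel" "\<And>t. \<bar>h t\<bar> \<le> C * indicator {a..b} t"
  shows "integrable lborel h"
proof (rule Bochner_Integration.integrable_bound[OF _ assms(1)])
  show "integrable lborel (\<lambda>t. indicator {a..b} t * C)"
    using borel_integrable_atLeastAtMost'[of a b "\<lambda>_. C"] unfolding set_integrable_def by simp
  show "AE x in lborel. norm (h x) \<le> norm (indicator {a..b} x * C)"
  proof (intro AE_I2)
    fix t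
    have "\<bar>h t\<bar> \<le> C * indicator {a..b} t" by (rule assms(2))
    moreover have "0 \<le> C * indicator {a..b} t" using abs_ge_zero[of "h t"] calculation by linarith
    ultimately show "norm (h t) \<le> norm (indicator {a..b} t * C)" by (simp add: mult.commute)
  qed
qed

lemma poly_int:
  fixes p q r :: real
  assumes "p \<le> q"
  shows "(\<integral>t. indicator {p..q} t * (t - r)^n \<partial>lborel) = ((q-r)^(n+1) - (p-r)^(n+1)) / (n+1)"
proof -
  have ci: "continuous_on {p..q} (\<lambda>t::real. (t - r)^n)" by (intro continuous_intros)
  have si: "set_integrable lborel {p..q} (\<lambda>t::real. (t - r)^n)"
    by (rule borel_integrable_atLeastAtMost') (rule ci)
  have "((\<lambda>t. (t - r)^n) has_integral ((q-r)^(n+1)/(n+1) - (p-r)^(n+1)/(n+1))) {p..q}"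
  proof (rule fundamental_theorem_of_calculus[OF assms])
    fix t assume "t \<in> {p..q}"
    have "((\<lambda>t. (t - r)^(n+1)/(n+1)) has_real_derivative (real (n+1) * (t-r)^n * 1)/(n+1)) (at t within {p..q})"
      by (intro derivative_eq_intros) auto
    then show "((\<lambda>t. (t - r)^(n+1)/(n+1)) has_vector_derivative (t - r)^n) (at t within {p..q})"
      by (simp add: has_real_derivative_iff_has_vector_derivative)
  qed
  then have "integral {p..q} (\<lambda>t. (t - r)^n) = ((q-r)^(n+1) - (p-r)^(n+1)) / (n+1)"
    by (simp add: integral_unique diff_divide_distrib)
  moreover have "(LINT t : {p..q} | lborel. (t - r)^n) = integral {p..q} (\<lambda>t. (t - r)^n)"
    by (rule set_borel_integral_eq_integral(2)[OF si])
  ultimately show ?thesis by (simp add: set_lebesgue_integral_def)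
qed

lemma poly_intg:
  fixes p q r :: real
  shows "integrable lborel (\<lambda>t. indicator {p..q} t * (t - r)^n)"
  using borel_integrable_atLeastAtMost'[of p q "\<lambda>t::real. (t - r)^n"]
  unfolding set_integrable_def by (simp add: continuous_intros)

lemma prod_bd:
  fixes u v C1 C2 :: real
  assumes "\<bar>u\<bar> \<le> C1 * indicator S t" "\<bar>v\<bar> \<le> C2 * indicator S t"
  shows "\<bar>u * v\<bar> \<le> (C1 * C2) * indicator S t"
proof (cases "t \<in> S")
  case True
  then have "\<bar>u\<bar> \<le> C1" "\<bar>v\<bar> \<le> C2" using assms by auto
  then have "\<bar>u\<bar> * \<bar>v\<bar> \<le> C1 * C2" by (intro mult_mono) auto
  then show ?thesis using True by (simp add: abs_mult)
next
  case False
  then show ?thesis using assms by auto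
qed

theorem theorem4p3:
  fixes M :: "'s measure" and X :: "'s \<Rightarrow> real" and f :: "real \<Rightarrow> real"
    and a b x :: real
  assumes "prob_space M"
    and "a < b"
    and "\<forall>\<omega>\<in>space M. X \<omega> \<in> {a..b}"
    and "distributed M lborel X (\<lambda>t. ennreal (indicator {a..b} t * f t))"
    and "\<forall>t\<in>{a..b}. 0 \<le> f t \<and> f t \<le> 1"
    and "(\<lambda>t. (f t)\<^sup>2) integrable_on {a..b}"
    and "x \<in> {a..(a+b)/2}"
  shows "let F = (\<lambda>y. measure M {\<omega>\<in>space M. X \<omega> \<le> y});
             EXv = integral\<^sup>L M X
         in \<bar>(F x + F (a + b - x)) / 2 - (b - EXv) / (b - a)\<bar>
            \<le> (b - a) powr (-1/2)
               * sqrt ((b - a)\<^sup>2 / 48 + (x - (3*a + b) / 4)\<^sup>2)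
               * sqrt (sigma_f a b f)"
proof -
  note D0 = assms(4)
  note f01 = assms(5)
  interpret prob_space M by fact
  define g where "g t = indicator {a..b} t * f t" for t
  have g0: "0 \<le> g t" for t using f01 by (auto simp: g_def indicator_def)
  have gb: "\<bar>g t\<bar> \<le> 1 * indicator {a..b} t" for t using f01 by (auto simp: g_def indicator_def)
  have g_lt: "t < a \<Longrightarrow> g t = 0" "b < t \<Longrightarrow> g t = 0" for t by (auto simp: g_def)
  have g_le1: "g t \<le> 1" for t using f01 by (auto simp: g_def indicator_def)
  have D: "distributed M lborel X (\<lambda>t. ennreal (g t))" using D0 by (simp add: g_def)
  have gm[measurable]: "g \<in> borel_measurable lborel"
    by (rule distributed_real_measurable[OF _ D]) (simp add: g0)
  have Xm[measurable]: "X \<in> measurable M lborel" using distributed_measurable[OF D] .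
  have gi: "integrable lborel g" by (rule int_bdd[OF gm gb])
  have Fy: "measure M {\<omega>\<in>space M. X \<omega> \<le> y} = (\<integral>t. g t * indicator {..y} t \<partial>lborel)" for y
  proof -
    have "(\<integral>t. g t * indicator {..y} t \<partial>lborel) = (\<integral>\<omega>. indicator {..y} (X \<omega>) \<partial>M)"
      by (rule distributed_integral[OF D]) (auto simp: g0)
    also have "\<dots> = (\<integral>\<omega>. indicator {\<omega>\<in>space M. X \<omega> \<le> y} \<omega> \<partial>M)"
      by (rule Bochner_Integration.integral_cong) (auto simp: indicator_def)
    also have "\<dots> = measure M {\<omega>\<in>space M. X \<omega> \<le> y}"
      by (subst Bochner_Integration.integral_indicator) auto
    finally show ?thesis by simp
  qed
  have EX: "(\<integral>t. g t * t \<partial>lborel) = (\<integral>\<omega>. X \<omega> \<partial>M)"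
    by (rule distributed_integral[OF D]) (auto simp: g0)
  have g1: "(\<integral>t. g t \<partial>lborel) = 1"
    using distributed_integral[OF D, of "\<lambda>_. 1"] by (simp add: g0 prob_space)
  define x' where "x' = a + b - x"
  define c where "c = 1 / (b - a)"
  have ab: "a < b" by fact
  have xs: "a \<le> x" "x \<le> x'" "x' \<le> b" "x \<le> b" "a \<le> x'" using assms(7) by (auto simp: x'_def)
  define K where "K t = ((if t \<le> x then 1 else 0) + (if t \<le> x' then 1 else 0)) / 2 - (b - t) / (b - a)" for t
  have Km[measurable]: "K \<in> borel_measurable lborel" unfolding K_def by measurable
  define Q where "Q = (\<integral>t. K t * g t \<partial>lborel)"
  have Qeq: "Q = (measure M {\<omega>\<in>space M. X \<omega> \<le> x} + measure M {\<omega>\<in>space M. X \<omega> \<le> x'}) / 2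
       - (b - (\<integral>\<omega>. X \<omega> \<partial>M)) / (b - a)"
  proof -
    have i1: "integrable lborel (\<lambda>t. g t * indicator {..y} t)" for y
      by (rule int_bdd[where C=1 and a=a and b=b]) (use g0 g_le1 g_lt in \<open>auto simp: indicator_def\<close>)
    have tb: "\<bar>g t * t\<bar> \<le> (\<bar>a\<bar>+\<bar>b\<bar>) * indicator {a..b} t" for t
    proof (cases "a \<le> t \<and> t \<le> b")
      case True
      have "\<bar>g t * t\<bar> = g t * \<bar>t\<bar>" using g0[of t] by (simp add: abs_mult)
      also have "\<dots> \<le> 1 * \<bar>t\<bar>" by (rule mult_right_mono[OF g_le1]) simp
      also have "\<dots> \<le> \<bar>a\<bar>+\<bar>b\<bar>" using True by auto
      finally show ?thesis using True by simp
    qed (use g_lt in auto)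
    have i2: "integrable lborel (\<lambda>t. g t * t)"
      by (rule int_bdd[OF _ tb]) measurable
    have "(\<lambda>t. K t * g t) = (\<lambda>t. (g t * indicator {..x} t + g t * indicator {..x'} t) / 2 - (b * g t - g t * t) / (b - a))"
      by (auto simp: K_def indicator_def field_simps)
    then have "Q = ((\<integral>t. g t * indicator {..x} t \<partial>lborel) + (\<integral>t. g t * indicator {..x'} t \<partial>lborel)) / 2
       - (b * (\<integral>t. g t \<partial>lborel) - (\<integral>t. g t * t \<partial>lborel)) / (b - a)"
      using i1 i2 gi by (simp add: Q_def)
    then show ?thesis using Fy EX g1 by simp
  qed
  have pa: "(\<integral>t. indicator {a..y} t \<partial>lborel) = y - a" if "a \<le> y" for y
    using poly_int[OF that, of 0 0] by simp
  have pb: "(\<integral>t. indicator {a..y} t * (t - b) \<partial>lborel) = ((y-b)^2 - (a-b)^2)/2" if "a \<le> y" for y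
    using poly_int[OF that, of b 1] by (simp add: power2_eq_square)
  have pc: "(\<integral>t. indicator {a..b} t * (t - b)^2 \<partial>lborel) = (b - a)^3/3"
    using poly_int[of a b b 2] ab by (simp add: power3_eq_cube algebra_simps)
  have ia: "integrable lborel (\<lambda>t. indicator {p..q} t :: real)" for p q :: real
    using poly_intg[of p q 0 0] by simp
  have ib: "integrable lborel (\<lambda>t. indicator {p..q} t * (t - b))" for p q :: real
    using poly_intg[of p q b 1] by simp
  have ic: "integrable lborel (\<lambda>t. indicator {p..q} t * (t - b)^2)" for p q :: real
    using poly_intg[of p q b 2] by simp
  have KI: "indicator {a..b} t * K t = (indicator {a..x} t + indicator {a..x'} t) / 2 + indicator {a..b} t * (t - b) / (b - a)" for t
    using xs ab by (auto simp: K_def indicator_def field_simps)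
  have KI0: "(\<integral>t. indicator {a..b} t * K t \<partial>lborel) = 0"
  proof -
    have "(\<integral>t. indicator {a..b} t * K t \<partial>lborel) = ((\<integral>t. indicator {a..x} t \<partial>lborel) + (\<integral>t. indicator {a..x'} t \<partial>lborel)) / 2
       + (\<integral>t. indicator {a..b} t * (t - b) \<partial>lborel) / (b - a)"
      unfolding KI using ia ib by simp
    also have "\<dots> = ((x - a) + (x' - a)) / 2 + (((b-b)^2 - (a-b)^2)/2) / (b - a)"
      using pa[of x] pa[of x'] pb[of b] xs ab by simp
    also have "\<dots> = 0" using ab by (simp add: x'_def field_simps power2_eq_square)
    finally show ?thesis .
  qed
  define A where "A = (\<integral>t. indicator {a..b} t * (K t)^2 \<partial>lborel)"
  have KI2: "indicator {a..b} t * (K t)^2 = (3 * indicator {a..x} t + indicator {a..x'} t) / 4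
      + (indicator {a..x} t * (t - b) + indicator {a..x'} t * (t - b)) / (b - a)
      + indicator {a..b} t * (t - b)^2 / (b - a)^2" for t
  proof -
    have ba: "b - a \<noteq> 0" using ab by simp
    define u where "u = (b - t) / (b - a)"
    have e1: "(indicator {a..x} t * (t - b) + indicator {a..x'} t * (t - b)) / (b - a) = (indicator {a..x} t + indicator {a..x'} t) * (- u)"
      using ba by (simp add: u_def field_simps)
    have e2: "indicator {a..b} t * (t - b)^2 / (b - a)^2 = indicator {a..b} t * u^2"
      by (simp add: u_def power_divide power2_commute)
    have e3: "K t = ((if t \<le> x then 1 else 0) + (if t \<le> x' then 1 else 0)) / 2 - u"
      by (simp add: K_def u_def)
    show ?thesis unfolding e1 e2 e3 using xs
      by (cases "t < a"; cases "b < t"; cases "t \<le> x"; cases "t \<le> x'")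
         (auto simp: indicator_def algebra_simps power2_eq_square)
  qed
  have Aval: "A = ((b - a)^2 / 48 + (x - (3*a + b)/4)^2) / (b - a)"
  proof -
    have "A = ((3 * (\<integral>t. indicator {a..x} t \<partial>lborel) + (\<integral>t. indicator {a..x'} t \<partial>lborel)) / 4
      + ((\<integral>t. indicator {a..x} t * (t - b) \<partial>lborel) + (\<integral>t. indicator {a..x'} t * (t - b) \<partial>lborel)) / (b - a)
      + (\<integral>t. indicator {a..b} t * (t - b)^2 \<partial>lborel) / (b - a)^2)"
      unfolding A_def KI2 using ia ib ic by simp
    also have "\<dots> = (3 * (x - a) + (x' - a)) / 4 + (((x-b)^2 - (a-b)^2)/2 + ((x'-b)^2 - (a-b)^2)/2) / (b - a)
       + (b - a)/3"
    proof -
      have "((b - a)^3/3) / (b - a)^2 = (b - a)/3" using ab by (simp add: power2_eq_square power3_eq_cube)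
      then show ?thesis unfolding pa[OF xs(1)] pa[OF xs(5)] pb[OF xs(1)] pb[OF xs(5)] pc by simp
    qed
    also have "\<dots> = ((b - a)^2 / 48 + (x - (3*a + b)/4)^2) / (b - a)"
      using ab by (simp add: x'_def field_simps power2_eq_square)
    finally show ?thesis .
  qed
  define h where "h t = g t - c * indicator {a..b} t" for t
  define L where "L t = indicator {a..b} t * K t" for t
  have c0: "0 < c" using ab by (simp add: c_def)
  have cba: "c * (b - a) = 1" using ab by (simp add: c_def)
  have hm[measurable]: "h \<in> borel_measurable lborel" unfolding h_def by measurable
  have Lm[measurable]: "L \<in> borel_measurable lborel" unfolding L_def by measurable
  have gI: "indicator {a..b} t * g t = g t" for t by (simp add: g_def indicator_def)
  have hb: "\<bar>h t\<bar> \<le> (1 + c) * indicator {a..b} t" for t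
    using g0[of t] g_le1[of t] g_lt[of t] c0 by (auto simp: h_def indicator_def)
  have Lb: "\<bar>L t\<bar> \<le> 2 * indicator {a..b} t" for t
  proof (cases "a \<le> t \<and> t \<le> b")
    case True
    define w where "w = (b - t) / (b - a)"
    have "0 \<le> w" "w \<le> 1" using True ab by (auto simp: divide_simps w_def)
    moreover have "L t = ((if t \<le> x then 1 else 0) + (if t \<le> x' then 1 else 0)) / 2 - w"
      using True by (simp add: L_def K_def w_def indicator_def)
    ultimately show ?thesis using True by (cases "t \<le> x"; cases "t \<le> x'") (simp_all add: indicator_def abs_le_iff)
  qed (auto simp: L_def indicator_def)
  have gb': "\<bar>g t\<bar> \<le> 1 * indicator {a..b} t" for t using gb[of t] by simp
  have i_hL: "integrable lborel (\<lambda>t. h t * L t)" by (rule int_bdd[OF _ prod_bd[OF hb Lb]]) measurable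
  have i_hh: "integrable lborel (\<lambda>t. h t * h t)" by (rule int_bdd[OF _ prod_bd[OF hb hb]]) measurable
  have i_LL: "integrable lborel (\<lambda>t. L t * L t)" by (rule int_bdd[OF _ prod_bd[OF Lb Lb]]) measurable
  have i_gg: "integrable lborel (\<lambda>t. g t * g t)" by (rule int_bdd[OF _ prod_bd[OF gb' gb']]) measurable
  have i_Lg: "integrable lborel (\<lambda>t. L t * g t)" by (rule int_bdd[OF _ prod_bd[OF Lb gb']]) measurable
  have i_L: "integrable lborel L" by (rule int_bdd[OF _ Lb]) measurable
  have QK: "(\<integral>t. h t * L t \<partial>lborel) = Q"
  proof -
    have e1: "h t * L t = L t * g t - c * L t" for t
      by (cases "t \<in> {a..b}") (simp_all add: h_def L_def algebra_simps)
    have e2: "L t * g t = K t * g t" for t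
      by (cases "t \<in> {a..b}") (simp_all add: L_def g_def)
    have L0: "(\<integral>t. L t \<partial>lborel) = 0" using KI0 by (simp add: L_def)
    have "(\<integral>t. h t * L t \<partial>lborel) = (\<integral>t. L t * g t - c * L t \<partial>lborel)" by (simp add: e1)
    also have "\<dots> = (\<integral>t. L t * g t \<partial>lborel) - c * (\<integral>t. L t \<partial>lborel)"
      using i_Lg i_L by simp
    also have "\<dots> = Q" unfolding L0 Q_def e2 by simp
    finally show ?thesis .
  qed
  define B where "B = (\<integral>t. h t * h t \<partial>lborel)"
  have Bv: "B = (\<integral>t. g t * g t \<partial>lborel) - c"
  proof -
    have e: "h t * h t = g t * g t - 2 * c * g t + c^2 * indicator {a..b} t" for t
      by (cases "t \<in> {a..b}") (simp_all add: h_def g_def algebra_simps power2_eq_square)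
    have "(\<lambda>t. h t * h t) = (\<lambda>t. g t * g t - 2 * c * g t + c^2 * indicator {a..b} t)"
      by (intro ext) (rule e)
    then have "B = (\<integral>t. g t * g t \<partial>lborel) - 2 * c * (\<integral>t. g t \<partial>lborel) + c^2 * (\<integral>t. indicator {a..b} t \<partial>lborel)"
      using i_gg gi ia by (simp add: B_def)
    also have "\<dots> = (\<integral>t. g t * g t \<partial>lborel) - c" unfolding g1 pa[OF less_imp_le[OF ab]]
      using cba by (simp add: power2_eq_square algebra_simps)
    finally show ?thesis .
  qed
  have AL: "(\<integral>t. L t * L t \<partial>lborel) = A"
    unfolding A_def L_def
    by (rule Bochner_Integration.integral_cong) (simp_all add: power2_eq_square indicator_times_eq_if)
  have Dnn: "0 \<le> (\<integral>t. (A * h t - Q * L t)^2 \<partial>lborel)" by simp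
  have "(\<lambda>t. (A * h t - Q * L t)^2) = (\<lambda>t. A^2 * (h t * h t) - 2 * A * Q * (h t * L t) + Q^2 * (L t * L t))"
    by (auto simp: power2_eq_square algebra_simps)
  then have "(\<integral>t. (A * h t - Q * L t)^2 \<partial>lborel) = A^2 * B - 2 * A * Q * Q + Q^2 * A"
    using i_hh i_hL i_LL QK AL by (simp add: B_def)
  with Dnn have "0 \<le> A * (A * B - Q^2)" by (simp add: algebra_simps power2_eq_square)
  moreover have Apos: "0 < A" unfolding Aval using ab by (intro divide_pos_pos add_pos_nonneg) auto
  ultimately have QAB: "Q^2 \<le> A * B" by (simp add: zero_le_mult_iff)
  have Bsig: "B = sigma_f a b f"
  proof -
    have si: "set_integrable lborel {a..b} (\<lambda>t. g t * g t)"
      unfolding set_integrable_def using i_gg by (simp add: mult.assoc[symmetric] gI)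
    have "(\<integral>t. g t * g t \<partial>lborel) = (LINT t:{a..b}|lborel. g t * g t)"
      by (simp add: set_lebesgue_integral_def mult.assoc[symmetric] gI)
    also have "\<dots> = integral {a..b} (\<lambda>t. g t * g t)" by (rule set_borel_integral_eq_integral(2)[OF si])
    also have "\<dots> = integral {a..b} (\<lambda>t. (f t)^2)"
      by (rule integral_cong) (auto simp: g_def power2_eq_square)
    finally show ?thesis unfolding Bv sigma_f_def c_def by simp
  qed
  have "\<bar>Q\<bar> \<le> sqrt A * sqrt B"
  proof -
    have "\<bar>Q\<bar> = sqrt (Q^2)" by simp
    also have "\<dots> \<le> sqrt (A * B)" using QAB by (rule real_sqrt_le_mono)
    finally show ?thesis by (simp add: real_sqrt_mult)
  qed
  moreover have "sqrt A = (b - a) powr (-1/2) * sqrt ((b - a)\<^sup>2 / 48 + (x - (3*a + b) / 4)\<^sup>2)"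
  proof -
    have "(b - a) powr (-1/2) = (b - a) powr (-(1/2))" by simp
    also have "\<dots> = inverse ((b - a) powr (1/2))" by (rule powr_minus)
    also have "\<dots> = inverse (sqrt (b - a))" using ab by (subst powr_half_sqrt) auto
    finally have pw: "(b - a) powr (-1/2) = inverse (sqrt (b - a))" .
    show ?thesis unfolding Aval pw real_sqrt_divide by (rule divide_inverse_commute)
  qed
  ultimately show ?thesis using Qeq Bsig by (simp add: Let_def x'_def)
qed
end
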